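(* Let $d\ge 2$ and for $\mathbf{p}\in(0,\infty)^d$ let $$G(\mathbf{p})=\min_{\mathbf{w}\in W_d}\frac{\prod_{i=1}^d p_i}{\big(\sum_{i=1}^d w_i^2p_i^2\big)^{d/2}}.$$ Then $\sup_{\mathbf{p}\in(0,\infty)^d}G(\mathbf{p})$ is attained, and there exists $\mathbf{p}^\star\in(0,\infty)^d$ such that every point of the one-dimensional vector half-space $P^\star=\{\kappa\mathbf{p}^\star:\kappa>0\}$ is a maximizer of $G$.
   Context: $W_d$ is the set of $d$ vectors $\mathbf{w}_k=(w_{k,1},\dots,w_{k,d})$, $k\in\{1,\dots,d\}$, given by $w_{k,i}=0$ for $i<k$, $w_{k,k}=k$, and $w_{k,i}=i-1$ for $k<i\le d$. *)

theory Defs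
  imports "HOL-Analysis.Analysis"
begin

text \<open>Vectors in (0,inf)^d are represented as functions nat => real, with
  components indexed by 1..d (values outside 1..d are irrelevant).\<close>

definition Wvec :: "nat \<Rightarrow> nat \<Rightarrow> real" where
  "Wvec k i = (if i < k then 0 else if i = k then real k else real i - 1)"

definition Wset :: "nat \<Rightarrow> (nat \<Rightarrow> real) set" where
  "Wset d = Wvec ` {1..d}"

definition posvec :: "nat \<Rightarrow> (nat \<Rightarrow> real) set" where
  "posvec d = {p. \<forall>i\<in>{1..d}. p i > 0}"

definition Gfun :: "nat \<Rightarrow> (nat \<Rightarrow> real) \<Rightarrow> real" where
  "Gfun d p = Min ((\<lambda>w. (\<Prod>i=1..d. p i) /
       ((\<Sum>i=1..d. (w i)^2 * (p i)^2) powr (real d / 2))) ` Wset d)"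

end

theory Submission
  imports Defs
begin

definition fw :: "nat \<Rightarrow> (nat \<Rightarrow> real) \<Rightarrow> (nat \<Rightarrow> real) \<Rightarrow> real" where
  "fw d w p = (\<Prod>i=1..d. p i) / ((\<Sum>i=1..d. (w i)^2 * (p i)^2) powr (real d / 2))"

lemma Gfun_alt: "Gfun d p = Min ((\<lambda>k. fw d (Wvec k) p) ` {1..d})"
  unfolding Gfun_def Wset_def fw_def by (simp add: image_image)

lemma Gfun_cong: "(\<And>i. i \<in> {1..d} \<Longrightarrow> p i = q i) \<Longrightarrow> Gfun d p = Gfun d q"
proof -
  assume h: "\<And>i. i \<in> {1..d} \<Longrightarrow> p i = q i"
  have "(\<Prod>i=1..d. p i) = (\<Prod>i=1..d. q i)" using h by (rule prod.cong[OF refl])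
  moreover have "\<And>w. (\<Sum>i=1..d. (w i)^2 * (p i)^2) = (\<Sum>i=1..d. (w i)^2 * (q i)^2)"
    using h by (intro sum.cong) auto
  ultimately show ?thesis unfolding Gfun_def by simp
qed

lemma fw_scale:
  assumes c: "c > 0"
  shows "fw d w (\<lambda>i. c * p i) = fw d w p"
proof -
  have P: "(\<Prod>i=1..d. c * p i) = c^d * (\<Prod>i=1..d. p i)"
    by (simp add: prod.distrib)
  have S: "(\<Sum>i=1..d. (w i)^2 * (c * p i)^2) = c^2 * (\<Sum>i=1..d. (w i)^2 * (p i)^2)"
    by (simp add: sum_distrib_left power_mult_distrib algebra_simps)
  have Snn: "(\<Sum>i=1..d. (w i)^2 * (p i)^2) \<ge> 0" by (intro sum_nonneg) auto
  have C: "(c^2) powr (real d / 2) = c^d"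
  proof -
    have "(c^2) powr (real d / 2) = (c powr 2) powr (real d / 2)"
      using c by (simp add: powr_realpow)
    also have "\<dots> = c powr (real d)" by (simp add: powr_powr)
    also have "\<dots> = c^d" using c by (simp add: powr_realpow)
    finally show ?thesis .
  qed
  show ?thesis unfolding fw_def P S
    using c Snn by (simp add: powr_mult C)
qed

lemma Gfun_scale: "c > 0 \<Longrightarrow> Gfun d (\<lambda>i. c * p i) = Gfun d p"
  unfolding Gfun_alt using fw_scale by simp

lemma fw_pos:
  assumes "\<forall>i\<in>{1..d}. p i > 0" "k \<in> {1..d}"
  shows "fw d (Wvec k) p > 0"
proof -
  have "(\<Prod>i=1..d. p i) > 0" using assms by (intro prod_pos) auto
  moreover have "(\<Sum>i=1..d. (Wvec k i)^2 * (p i)^2) > 0"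
  proof -
    have "(\<Sum>i=1..d. (Wvec k i)^2 * (p i)^2) \<ge> (Wvec k k)^2 * (p k)^2"
      using assms(2) by (intro member_le_sum) auto
    moreover have "(Wvec k k)^2 * (p k)^2 > 0"
    proof -
      have "p k > 0" using assms by auto
      moreover have "Wvec k k > 0" using assms(2) by (simp add: Wvec_def)
      ultimately show ?thesis by simp
    qed
    ultimately show ?thesis by linarith
  qed
  ultimately show ?thesis unfolding fw_def by simp
qed

lemma Gfun_pos:
  assumes "\<forall>i\<in>{1..d}. p i > 0" "d \<ge> 1"
  shows "Gfun d p > 0"
  unfolding Gfun_alt using assms fw_pos by (subst Min_gr_iff) auto

lemma Gfun_bound:
  assumes d: "d \<ge> 1" and pp: "\<forall>i\<in>{1..d}. 0 < p i \<and> p i \<le> 1"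
    and j: "j \<in> {1..d}" "p j = 1" and i: "i \<in> {1..d}"
  shows "Gfun d p \<le> p i"
proof -
  have "Gfun d p \<le> fw d (Wvec 1) p" unfolding Gfun_alt using d by (intro Min_le) auto
  also have "\<dots> \<le> p i"
  proof -
    define P where "P = (\<Prod>i=1..d. p i)"
    define D where "D = (\<Sum>i=1..d. (Wvec 1 i)^2 * (p i)^2)"
    have "D \<ge> (Wvec 1 j)^2 * (p j)^2" unfolding D_def using j by (intro member_le_sum) auto
    moreover have "Wvec 1 j \<ge> 1" using j by (auto simp: Wvec_def)
    ultimately have D1: "D \<ge> 1"
    proof -
      assume a: "D \<ge> (Wvec 1 j)^2 * (p j)^2" "Wvec 1 j \<ge> 1"
      have "(Wvec 1 j)^2 \<ge> 1" using a(2) by (rule one_le_power)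
      then show ?thesis using a(1) j by simp
    qed
    hence Dp: "D powr (real d / 2) \<ge> 1" by (intro ge_one_powr_ge_zero) auto
    have P0: "P \<ge> 0" unfolding P_def using pp by (intro prod_nonneg) (auto simp: less_imp_le)
    have pnn: "\<And>k. k \<in> {1..d} \<Longrightarrow> 0 \<le> p k \<and> p k \<le> 1"
    proof -
      fix k assume "k \<in> {1..d}"
      then have "0 < p k \<and> p k \<le> 1" using pp by blast
      then show "0 \<le> p k \<and> p k \<le> 1" by linarith
    qed
    have "P = p i * (\<Prod>k\<in>{1..d}-{i}. p k)" unfolding P_def using i
      by (simp add: prod.remove)
    also have "\<dots> \<le> p i * 1" using pnn i
      by (intro mult_left_mono prod_le_1) auto
    finally have "P \<le> p i" by simp
    moreover have "P / D powr (real d / 2) \<le> P" using P0 Dp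
      by (simp add: divide_le_eq mult_le_cancel_left1 order_trans)
    ultimately show ?thesis unfolding fw_def P_def D_def by linarith
  qed
  finally show ?thesis .
qed

lemma continuous_on_Min_fam:
  fixes g :: "'i \<Rightarrow> 'a::topological_space \<Rightarrow> real"
  assumes "finite A" "A \<noteq> {}" "\<And>a. a \<in> A \<Longrightarrow> continuous_on K (g a)"
  shows "continuous_on K (\<lambda>x. Min ((\<lambda>a. g a x) ` A))"
  using assms
proof (induction A rule: finite_ne_induct)
  case (singleton a) then show ?case by simp
next
  case (insert a A)
  have "continuous_on K (\<lambda>x. min (g a x) (Min ((\<lambda>a. g a x) ` A)))"
    using insert by (intro continuous_on_min) auto
  then show ?case using insert by (simp add: Min_insert)
qed

lemma S_pos:
  assumes "\<forall>i\<in>{1..d}. p i > 0" "k \<in> {1..d}"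
  shows "(\<Sum>i=1..d. (Wvec k i)^2 * (p i)^2) > 0"
proof -
  have "(\<Sum>i=1..d. (Wvec k i)^2 * (p i)^2) \<ge> (Wvec k k)^2 * (p k)^2"
    using assms(2) by (intro member_le_sum) auto
  moreover have "(Wvec k k)^2 * (p k)^2 > 0"
  proof -
    have "p k > 0" using assms by auto
    moreover have "Wvec k k > 0" using assms(2) by (simp add: Wvec_def)
    ultimately show ?thesis by simp
  qed
  ultimately show ?thesis by linarith
qed

lemma coord_cont: "continuous_on K (\<lambda>p::nat\<Rightarrow>real. p i)"
  by (rule continuous_on_subset[OF continuous_on_product_coordinates]) simp

lemma fw_cont:
  assumes "\<forall>p\<in>K. \<forall>i\<in>{1..d}. p i > 0" "k \<in> {1..d}"
  shows "continuous_on K (fw d (Wvec k))"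
proof -
  have "\<forall>p\<in>K. (\<Sum>i=1..d. (Wvec k i)^2 * (p i)^2) > 0" using assms S_pos by blast
  then show ?thesis unfolding fw_def
    by (intro continuous_intros coord_cont) auto
qed

lemma Gfun_cont:
  assumes "\<forall>p\<in>K. \<forall>i\<in>{1..d}. p i > 0" "d \<ge> 1"
  shows "continuous_on K (Gfun d)"
proof -
  have "continuous_on K (\<lambda>p. Min ((\<lambda>k. fw d (Wvec k) p) ` {1..d}))"
    using assms fw_cont by (intro continuous_on_Min_fam) auto
  then show ?thesis unfolding Gfun_alt .
qed

theorem lemma3:
  fixes d :: nat
  assumes "d \<ge> 2"
  shows "(\<exists>p\<in>posvec d. Gfun d p = (SUP q\<in>posvec d. Gfun d q))
       \<and> (\<exists>ps\<in>posvec d. \<forall>\<kappa>::real. \<kappa> > 0 \<longrightarrow>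
            (\<lambda>i. \<kappa> * ps i) \<in> posvec d \<and>
            (\<forall>q\<in>posvec d. Gfun d q \<le> Gfun d (\<lambda>i. \<kappa> * ps i)))"
proof -
  have d1: "d \<ge> 1" using assms by simp
  define one :: "nat \<Rightarrow> real" where "one = (\<lambda>i. if i \<in> {1..d} then 1 else 0)"
  define e where "e = Gfun d one"
  have e0: "e > 0" unfolding e_def one_def using d1 by (intro Gfun_pos) auto
  have e1: "e \<le> 1" unfolding e_def
    using Gfun_bound[OF d1, of one 1 1] d1 by (simp add: one_def)
  define S :: "nat \<Rightarrow> real set" where "S = (\<lambda>i. if i \<in> {1..d} then {e..1} else {0})"
  define K where "K = PiE UNIV S"
  have Kmem: "p \<in> K \<longleftrightarrow> (\<forall>i. p i \<in> S i)" for p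
    unfolding K_def by (simp add: PiE_iff)
  have "compactin (product_topology (\<lambda>i. euclidean) UNIV) K"
    unfolding K_def by (subst compactin_PiE) (auto simp: S_def)
  hence cK: "compact K" by (simp add: euclidean_product_topology)
  have Kpos: "\<forall>p\<in>K. \<forall>i\<in>{1..d}. p i > 0"
  proof (intro ballI)
    fix p i assume "p \<in> K" "i \<in> {1..d}"
    then have "p i \<in> S i" "i \<in> {1..d}" using Kmem by blast+
    then have "p i \<in> {e..1}" unfolding S_def by simp
    then show "p i > 0" using e0 by simp
  qed
  have oneK: "one \<in> K" using e1 by (auto simp: Kmem S_def one_def)
  have cG: "continuous_on K (Gfun d)" using Gfun_cont[OF Kpos d1] .
  obtain ps where psK: "ps \<in> K" and psmax: "\<forall>y\<in>K. Gfun d y \<le> Gfun d ps"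
    using continuous_attains_sup[OF cK _ cG] oneK by blast
  have pspos: "ps \<in> posvec d" using Kpos psK by (simp add: posvec_def)
  have main: "Gfun d q \<le> Gfun d ps" if q: "q \<in> posvec d" for q
  proof -
    define M where "M = Max (q ` {1..d})"
    have qpos: "\<forall>i\<in>{1..d}. q i > 0" using q by (simp add: posvec_def)
    obtain j where j: "j \<in> {1..d}" "q j = M"
    proof -
      have "M \<in> q ` {1..d}" unfolding M_def using d1 by (intro Max_in) auto
      then show ?thesis using that by auto
    qed
    have M0: "M > 0" using j qpos by auto
    have qM: "q i \<le> M" if "i \<in> {1..d}" for i unfolding M_def using that by simp
    define q' where "q' = (\<lambda>i. if i \<in> {1..d} then q i / M else 0)"
    have "Gfun d q = Gfun d (\<lambda>i. (1/M) * q i)" using Gfun_scale[of "1/M" d q] M0 by simp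
    also have "\<dots> = Gfun d q'" by (rule Gfun_cong) (simp add: q'_def)
    finally have Gq: "Gfun d q = Gfun d q'" .
    show ?thesis
    proof (cases "\<forall>i\<in>{1..d}. q' i \<ge> e")
      case True
      have "q' \<in> K" unfolding Kmem
      proof
        fix i show "q' i \<in> S i"
        proof (cases "i \<in> {1..d}")
          case True
          then show ?thesis using \<open>\<forall>i\<in>{1..d}. q' i \<ge> e\<close> qM[OF True] M0
            by (simp add: S_def q'_def)
        next
          case False
          then show ?thesis by (auto simp: S_def q'_def)
        qed
      qed
      then show ?thesis using Gq psmax by simp
    next
      case False
      then obtain i where i: "i \<in> {1..d}" "q' i < e" by auto
      have "Gfun d q' \<le> q' i"
      proof (rule Gfun_bound[OF d1 _ j(1) _ i(1)])
        show "\<forall>i\<in>{1..d}. 0 < q' i \<and> q' i \<le> 1"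
          using qpos qM M0 by (simp add: q'_def)
        show "q' j = 1" using j M0 by (simp add: q'_def)
      qed
      moreover have "e \<le> Gfun d ps" using psmax oneK unfolding e_def by simp
      ultimately show ?thesis using Gq i by simp
    qed
  qed
  have "(SUP q\<in>posvec d. Gfun d q) = Gfun d ps"
    using pspos main by (intro cSup_eq_maximum) auto
  moreover have "\<forall>\<kappa>::real. \<kappa> > 0 \<longrightarrow> (\<lambda>i. \<kappa> * ps i) \<in> posvec d \<and>
            (\<forall>q\<in>posvec d. Gfun d q \<le> Gfun d (\<lambda>i. \<kappa> * ps i))"
    using pspos main by (auto simp: posvec_def Gfun_scale)
  ultimately show ?thesis using pspos by metis
qed

end
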